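(* Let $\mathcal{W}\in\mathbb{R}^{w_1\times\cdots\times w_N}$ with $N\ge 2$. For $n=1,\dots,N$ let $e_n(m)\in\mathbb{Z}_{>0}^N$ denote the shape with $m$ in position $n$ and $1$ in all other positions, and let $\mathbf{1}=(1,\dots,1)$. (i) (CP) If $\mathcal{W}_{i_1\cdots i_N}=\sum_{r=1}^{R}U^{(1)}_{r i_1}\cdots U^{(N)}_{r i_N}$ for some matrices $U^{(n)}\in\mathbb{R}^{R\times w_n}$, then $\mathcal{W}$ admits a SeKron representation with $S=N$, ranks $R_1=R$, $R_2=\cdots=R_{N-1}=1$, and factor shapes $e_n(w_n)$ for the $n$-th factor. (ii) (Tucker) If $\mathcal{W}_{i_1\cdots i_N}=\sum_{r_1,\dots,r_N}\mathcal{G}_{r_1\cdots r_N}U^{(1)}_{i_1r_1}\cdots U^{(N)}_{i_Nr_N}$ for some core $\mathcal{G}\in\mathbb{R}^{R_1^{T}\times\cdots\times R_N^{T}}$ and matrices $U^{(n)}\in\mathbb{R}^{w_n\times R^{T}_n}$, then $\mathcal{W}$ admits a SeKron representation with $S=N+1$, ranks $R_n=R^{T}_n$ ($n=1,\dots,N$), factor shapes $e_n(w_n)$ for the $n$-th factor ($n\le N$) and $\mathbf{1}$ for the $(N+1)$-th factor. (iii) (Tensor Ring, and hence Tensor Train as the case $R^{TR}_1=1$) If $\mathcal{W}_{i_1\cdots i_N}=\sum_{r_1,\dots,r_N}\mathcal{G}^{(1)}_{i_1r_1r_2}\mathcal{G}^{(2)}_{i_2r_2r_3}\cdots\mathcal{G}^{(N)}_{i_Nr_Nr_{N+1}}$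 with $r_{N+1}:=r_1$, for some cores $\mathcal{G}^{(n)}\in\mathbb{R}^{w_n\times R^{TR}_n\times R^{TR}_{n+1}}$ with $R^{TR}_{N+1}=R^{TR}_1$, then $\mathcal{W}$ admits a SeKron representation with $S=N+1$, ranks $R_n=R^{TR}_n$ ($n=1,\dots,N$), factor shape $\mathbf{1}$ for the first factor and $e_n(w_n)$ for the $(n+1)$-th factor ($n=1,\dots,N$).
   Context: Indices are 0-based. Kronecker product of tensors $\mathcal{A}\in\mathbb{R}^{a_1\times\cdots\times a_N}$, $\mathcal{B}\in\mathbb{R}^{b_1\times\cdots\times b_N}$: $(\mathcal{A}\otimes\mathcal{B})_{i_1\cdots i_N}=\mathcal{A}_{j_1\cdots j_N}\mathcal{B}_{k_1\cdots k_N}$, $j_n=\lfloor i_n/b_n\rfloor$, $k_n=i_n\bmod b_n$; it is associative and bilinear. A SeKron representation of $\mathcal{W}$ with sequence length $S$, ranks $R_1,\dots,R_{S-1}$ and factor shapes $(a^{(k)}_1,\dots,a^{(k)}_N)$, $k=1,\dots,S$ (with $\prod_k a^{(k)}_n=w_n$), is an identity $\mathcal{W}=\sum_{r_1=1}^{R_1}\cdots\sum_{r_{S-1}=1}^{R_{S-1}}\mathcal{A}^{(1)}_{r_1}\otimes\mathcal{A}^{(2)}_{r_1r_2}\otimes\cdots\otimes\mathcal{A}^{(S-1)}_{r_1\cdots r_{S-1}}\otimes\mathcal{A}^{(S)}_{r_1\cdots r_{S-1}}$ with $\mathcal{A}^{(k)}_{\cdots}\in\mathbb{R}^{a^{(k)}_1\times\cdots\times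 a^{(k)}_N}$. *)

theory Defs
  imports Complex_Main
begin

text \<open>An order-N real tensor of shape w (a list of length N) is a function on
  0-based index lists; only indices within bounds matter.\<close>
type_synonym tensor = "nat list \<Rightarrow> real"

definition in_bounds :: "nat list \<Rightarrow> nat list \<Rightarrow> bool" where
  "in_bounds w i \<longleftrightarrow> length i = length w \<and> (\<forall>n<length w. i ! n < w ! n)"

definition kron :: "nat list \<Rightarrow> tensor \<Rightarrow> tensor \<Rightarrow> tensor" where
  "kron bs A B = (\<lambda>i. A (map2 (div) i bs) * B (map2 (mod) i bs))"

fun kronl :: "(nat list \<times> tensor) list \<Rightarrow> nat list \<times> tensor" where
  "kronl [] = ([], (\<lambda>_. 1))"
| "kronl [x] = x"
| "kronl (x # xs) = (let (s, B) = kronl xs in (map2 (*) (fst x) s, kron s (snd x) B))"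

text \<open>Rank tuples (r_1,...,r_m) stored 0-based: r_j < R j (ranks indexed from 1).\<close>
definition rank_tuples :: "(nat \<Rightarrow> nat) \<Rightarrow> nat \<Rightarrow> nat list set" where
  "rank_tuples R m = {rs. length rs = m \<and> (\<forall>j<m. rs ! j < R (Suc j))}"

text \<open>SeKron representation of W (shape w) with sequence length S, ranks R 1..R (S-1)
  and factor shapes a 1..a S.\<close>
definition has_sekron ::
  "nat list \<Rightarrow> tensor \<Rightarrow> nat \<Rightarrow> (nat \<Rightarrow> nat) \<Rightarrow> (nat \<Rightarrow> nat list) \<Rightarrow> bool" where
  "has_sekron w W S R a \<longleftrightarrow>
     1 \<le> S \<and>
     (\<forall>k\<in>{1..S}. length (a k) = length w) \<and>
     (\<forall>n<length w. (\<Prod>k=1..S. a k ! n) = w ! n) \<and>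
     (\<exists>A :: nat \<Rightarrow> nat list \<Rightarrow> tensor.
        \<forall>i. in_bounds w i \<longrightarrow>
          W i = (\<Sum>rs\<in>rank_tuples R (S - 1).
                   snd (kronl (map (\<lambda>k. (a k, A k (take (min k (S - 1)) rs))) [1..<S + 1])) i))"

definition e_shape :: "nat \<Rightarrow> nat \<Rightarrow> nat \<Rightarrow> nat list" where
  "e_shape N n m = map (\<lambda>j. if Suc j = n then m else 1) [0..<N]"

end

theory Submission
  imports Defs
begin


fun okk :: "nat \<Rightarrow> nat list list \<Rightarrow> bool" where
  "okk N [] = True"
| "okk N (x # xs) = ((\<forall>n<N. x ! n \<noteq> 1 \<longrightarrow> (\<forall>y\<in>set xs. y ! n = 1)) \<and> okk N xs)"

lemma okk_intro:
  "(\<forall>j<length xs. \<forall>n<N. xs ! j ! n \<noteq> 1 \<longrightarrow> j = g n) \<Longrightarrow> okk N xs"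
proof (induction xs arbitrary: g)
  case Nil then show ?case by simp
next
  case (Cons x xs)
  have h0: "\<forall>n<N. x ! n \<noteq> 1 \<longrightarrow> g n = 0" using Cons.prems by force
  have "\<forall>j<length xs. \<forall>n<N. xs ! j ! n \<noteq> 1 \<longrightarrow> j = g n - 1"
    using Cons.prems by fastforce
  then have t: "okk N xs" by (rule Cons.IH)
  have "\<forall>n<N. x ! n \<noteq> 1 \<longrightarrow> (\<forall>y\<in>set xs. y ! n = 1)"
  proof (intro allI impI ballI)
    fix n y assume n: "n < N" "x ! n \<noteq> 1" and y: "y \<in> set xs"
    then obtain j where j: "j < length xs" "y = xs ! j" by (metis in_set_conv_nth)
    show "y ! n = 1"
    proof (rule ccontr)
      assume "y ! n \<noteq> 1"
      then have "Suc j = g n" using Cons.prems j n(1) by (metis Suc_less_eq length_Cons nth_Cons_Suc)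
      with h0 n show False by simp
    qed
  qed
  with t show ?case by simp
qed

lemma kronl_fst:
  "xs \<noteq> [] \<Longrightarrow> \<forall>x\<in>set xs. length (fst x) = N \<Longrightarrow>
   length (fst (kronl xs)) = N \<and> (\<forall>n<N. fst (kronl xs) ! n = (\<Prod>x\<leftarrow>xs. fst x ! n))"
proof (induction xs rule: kronl.induct)
  case 1 then show ?case by simp
next
  case (2 x) then show ?case by simp
next
  case (3 x y zs)
  obtain s B where sB: "kronl (y # zs) = (s, B)" by (cases "kronl (y # zs)")
  from 3 sB have "length s = N" "\<forall>n<N. s ! n = (\<Prod>x\<leftarrow>y#zs. fst x ! n)" by auto
  with "3.prems"(2) sB show ?case by simp
qed

lemma prod_ones: "\<forall>y\<in>set ys. fst y ! n = (1::nat) \<Longrightarrow> (\<Prod>x\<leftarrow>ys. fst x ! n) = 1"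
  by (induction ys) auto

lemma nth_map2: "n < length xs \<Longrightarrow> n < length ys \<Longrightarrow> map2 f xs ys ! n = f (xs ! n) (ys ! n)"
  by simp

lemma okk_head: "okk N (a # as) \<Longrightarrow> n < N \<Longrightarrow> a ! n \<noteq> 1 \<Longrightarrow> v \<in> set as \<Longrightarrow> v ! n = 1"
  by simp

lemma kronl_snd:
  "xs \<noteq> [] \<Longrightarrow> \<forall>x\<in>set xs. length (fst x) = N \<Longrightarrow> okk N (map fst xs) \<Longrightarrow>
   length i = N \<Longrightarrow> (\<forall>n<N. i ! n < fst (kronl xs) ! n) \<Longrightarrow>
   snd (kronl xs) i = (\<Prod>x\<leftarrow>xs. snd x (map2 (mod) i (fst x)))"
proof (induction xs arbitrary: i rule: kronl.induct)
  case 1 then show ?case by simp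
next
  case (2 x)
  have "map2 (mod) i (fst x) = i"
    by (rule nth_equalityI) (use 2 in auto)
  then show ?case by simp
next
  case (3 x y zs)
  obtain s B where sB: "kronl (y # zs) = (s, B)" by (cases "kronl (y # zs)")
  have fs: "length s = N" "\<forall>n<N. s ! n = (\<Prod>x\<leftarrow>y#zs. fst x ! n)"
    using kronl_fst[of "y # zs" N] "3.prems"(2) sB by auto
  have lx: "length (fst x) = N" using "3.prems"(2) by simp
  have kf: "fst (kronl (x # y # zs)) = map2 (*) (fst x) s" using sB by simp
  have top: "\<forall>n<N. fst (kronl (x # y # zs)) ! n = fst x ! n * s ! n"
    unfolding kf using fs lx by simp
  have ib: "\<forall>n<N. i ! n < fst x ! n * s ! n" using "3.prems"(5) top by metis
  have spos: "\<forall>n<N. s ! n > 0"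
  proof (intro allI impI)
    fix n assume "n < N" then show "s ! n > 0" using ib[rule_format, of n] by (cases "s ! n") auto
  qed
  have okx: "\<forall>n<N. fst x ! n \<noteq> 1 \<longrightarrow> (\<forall>y'\<in>set (y#zs). fst y' ! n = 1)"
  proof (intro allI impI ballI)
    fix n y' assume a: "n < N" "fst x ! n \<noteq> 1" "y' \<in> set (y#zs)"
    have o: "okk N (fst x # map fst (y#zs))" using "3.prems"(3) list.map(2)[of fst x "y#zs"] by metis
    show "fst y' ! n = 1" using okk_head[OF o a(1,2), of "fst y'"] a(3) by auto
  qed
  have head: "map2 (div) i s = map2 (mod) i (fst x)"
  proof (rule nth_equalityI)
    show "length (map2 (div) i s) = length (map2 (mod) i (fst x))" using fs lx "3.prems"(4) by simp
  next
    fix n assume "n < length (map2 (div) i s)"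
    then have n: "n < N" using fs "3.prems"(4) by simp
    show "map2 (div) i s ! n = map2 (mod) i (fst x) ! n"
    proof (cases "fst x ! n = 1")
      case True
      then have "i ! n < s ! n" using ib[rule_format, OF n] by simp
      then show ?thesis using n fs lx "3.prems"(4) True by simp
    next
      case False
      then have "\<forall>y'\<in>set (y#zs). fst y' ! n = 1" using okx n by blast
      then have "s ! n = 1" using fs(2) n prod_ones by metis
      moreover have "i ! n < fst x ! n" using ib[rule_format, OF n] \<open>s ! n = 1\<close> by simp
      ultimately show ?thesis using n fs(1) lx "3.prems"(4) by simp
    qed
  qed
  have tl: "B (map2 (mod) i s) = (\<Prod>x\<leftarrow>y#zs. snd x (map2 (mod) (map2 (mod) i s) (fst x)))"
  proof -
    have "snd (kronl (y # zs)) (map2 (mod) i s) = (\<Prod>x\<leftarrow>y#zs. snd x (map2 (mod) (map2 (mod) i s) (fst x)))"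
    proof (rule "3.IH")
      show "okk N (map fst (y # zs))" using "3.prems"(3) list.map(2)[of fst x "y#zs"] by (metis okk.simps(2))
      show "\<forall>x\<in>set (y # zs). length (fst x) = N" using "3.prems"(2) by simp
      show "length (map2 (mod) i s) = N" using fs(1) "3.prems"(4) by simp
      show "\<forall>n<N. map2 (mod) i s ! n < fst (kronl (y # zs)) ! n"
      proof (intro allI impI)
        fix n assume n: "n < N"
        have "map2 (mod) i s ! n = i ! n mod s ! n" using n fs(1) "3.prems"(4) by (simp add: nth_map2)
        also have "\<dots> < s ! n" using spos n by simp
        finally show "map2 (mod) i s ! n < fst (kronl (y # zs)) ! n" using sB by simp
      qed
    qed simp
    then show ?thesis using sB by simp
  qed
  have cong: "map2 (mod) (map2 (mod) i s) (fst y') = map2 (mod) i (fst y')" if y': "y' \<in> set (y#zs)" for y'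
  proof (rule nth_equalityI)
    show "length (map2 (mod) (map2 (mod) i s) (fst y')) = length (map2 (mod) i (fst y'))"
      using fs "3.prems"(2,4) y' by auto
  next
    fix n assume "n < length (map2 (mod) (map2 (mod) i s) (fst y'))"
    then have n: "n < N" using fs "3.prems"(4) by simp
    have "fst y' ! n dvd s ! n" using fs(2) n y'
      by (metis image_eqI list.set_map prod_list_dvd)
    moreover have ly: "length (fst y') = N" using "3.prems"(2) y' by auto
    ultimately show "map2 (mod) (map2 (mod) i s) (fst y') ! n = map2 (mod) i (fst y') ! n"
      using n fs(1) "3.prems"(4) by (simp add: nth_map2 mod_mod_cancel)
  qed
  have "(\<Prod>x\<leftarrow>y#zs. snd x (map2 (mod) (map2 (mod) i s) (fst x)))
        = (\<Prod>x\<leftarrow>y#zs. snd x (map2 (mod) i (fst x)))"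
    by (rule arg_cong[where f=prod_list], rule map_cong) (use cong in auto)
  then show ?case using sB head tl by (simp add: kron_def)
qed


lemma pl_upt: "prod_list (map f [1..<S + 1]) = prod f {1..S}"
proof -
  have "prod_list (map f [1..<S + 1]) = prod f (set [1..<S + 1])"
    by (rule prod.distinct_set_conv_list[symmetric]) simp
  also have "set [1..<S + 1] = {1..S}" by auto
  finally show ?thesis .
qed

lemma sekron_intro:
  assumes S: "1 \<le> S" and la: "\<forall>k\<in>{1..S}. length (a k) = length w"
    and pr: "\<forall>n<length w. (\<Prod>k=1..S. a k ! n) = w ! n"
    and pos: "\<forall>j<S. \<forall>n<length w. a (Suc j) ! n \<noteq> 1 \<longrightarrow> j = g n"
    and eq: "\<forall>i. in_bounds w i \<longrightarrow> W i = (\<Sum>rs\<in>rank_tuples R (S - 1).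
               \<Prod>k=1..S. A k (take (min k (S - 1)) rs) (map2 (mod) i (a k)))"
  shows "has_sekron w W S R a"
proof -
  have main: "W i = (\<Sum>rs\<in>rank_tuples R (S - 1).
          snd (kronl (map (\<lambda>k. (a k, A k (take (min k (S - 1)) rs))) [1..<S + 1])) i)"
    if ib: "in_bounds w i" for i
  proof -
  have li: "length i = length w" and ib2: "\<forall>n<length w. i ! n < w ! n"
    using ib unfolding in_bounds_def by auto
  show "W i = (\<Sum>rs\<in>rank_tuples R (S - 1).
          snd (kronl (map (\<lambda>k. (a k, A k (take (min k (S - 1)) rs))) [1..<S + 1])) i)"
    unfolding eq[rule_format, OF ib]
  proof (rule sum.cong[OF refl])
    fix rs
    define xs where "xs = map (\<lambda>k. (a k, A k (take (min k (S - 1)) rs))) [1..<S + 1]"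
    have ne: "xs \<noteq> []" using S unfolding xs_def by simp
    have lx: "\<forall>x\<in>set xs. length (fst x) = length w" using la unfolding xs_def by auto
    have mf: "map fst xs = map a [1..<S + 1]" unfolding xs_def by simp
    have ok: "okk (length w) (map fst xs)" unfolding mf
      by (rule okk_intro[where g=g]) (use pos in \<open>auto simp del: upt_Suc\<close>)
    have bd: "\<forall>n<length w. i ! n < fst (kronl xs) ! n"
    proof (intro allI impI)
      fix n assume n: "n < length w"
      have "fst (kronl xs) ! n = (\<Prod>x\<leftarrow>xs. fst x ! n)" using kronl_fst[OF ne lx] n by blast
      also have "\<dots> = prod_list (map (\<lambda>k. a k ! n) [1..<S + 1])" unfolding xs_def by (simp add: comp_def)
      also have "\<dots> = w ! n" using pl_upt pr n by metis
      finally show "i ! n < fst (kronl xs) ! n" using ib2 n by simp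
    qed
    have "snd (kronl xs) i = (\<Prod>x\<leftarrow>xs. snd x (map2 (mod) i (fst x)))"
      by (rule kronl_snd[OF ne lx ok li bd])
    also have "\<dots> = prod_list (map (\<lambda>k. A k (take (min k (S - 1)) rs) (map2 (mod) i (a k))) [1..<S + 1])"
      unfolding xs_def by (simp add: comp_def)
    also have "\<dots> = (\<Prod>k=1..S. A k (take (min k (S - 1)) rs) (map2 (mod) i (a k)))" by (rule pl_upt)
    finally show "(\<Prod>k=1..S. A k (take (min k (S - 1)) rs) (map2 (mod) i (a k))) = snd (kronl xs) i" by simp
  qed
  qed
  show ?thesis unfolding has_sekron_def using S la pr main by blast
qed



lemma e_shape_len[simp]: "length (e_shape N k m) = N"
  by (simp add: e_shape_def)

lemma e_shape_nth[simp]: "j < N \<Longrightarrow> e_shape N k m ! j = (if Suc j = k then m else 1)"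
  by (simp add: e_shape_def)

lemma rt_sum:
  assumes "N \<ge> 2"
  shows "(\<Sum>rs\<in>rank_tuples (\<lambda>k. if k = 1 then R else 1) (N - 1). f (rs ! 0)) = (\<Sum>r<R. f r)"
proof (rule sum.reindex_bij_witness[of _ "\<lambda>r. r # replicate (N - 2) 0" "\<lambda>rs. rs ! 0"])
  fix rs assume rs: "rs \<in> rank_tuples (\<lambda>k. if k = 1 then R else 1) (N - 1)"
  then have l: "length rs = N - 1" and b: "\<forall>j<N - 1. rs ! j < (if Suc j = 1 then R else 1)"
    unfolding rank_tuples_def by auto
  have "0 < N - 1" using assms by simp
  then show "rs ! 0 \<in> {..<R}" using b[rule_format, of 0] by simp
  show "rs ! 0 # replicate (N - 2) 0 = rs"
  proof (rule nth_equalityI)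
    show "length (rs ! 0 # replicate (N - 2) 0) = length rs" using l assms by simp
  next
    fix j assume "j < length (rs ! 0 # replicate (N - 2) 0)"
    then have j: "j < N - 1" using l assms by simp
    show "(rs ! 0 # replicate (N - 2) 0) ! j = rs ! j"
    proof (cases j)
      case 0 then show ?thesis by simp
    next
      case (Suc j')
      then have "rs ! j < 1" using b j by fastforce
      then show ?thesis using Suc j by (simp add: nth_Cons')
    qed
  qed
next
  fix r assume r: "r \<in> {..<R}"
  show "(r # replicate (N - 2) 0) ! 0 = r" by simp
  show "r # replicate (N - 2) 0 \<in> rank_tuples (\<lambda>k. if k = 1 then R else 1) (N - 1)"
    unfolding rank_tuples_def using r assms by (auto simp: nth_Cons')
qed simp

lemma prod_delta_w:
  assumes "n < N"
  shows "(\<Prod>k=1..N. (if Suc n = k then (w ! (k - 1)::nat) else 1)) = w ! n"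
proof -
  have "(\<Prod>k=1..N. (if Suc n = k then (w ! (k - 1)::nat) else 1)) = (\<Prod>k\<in>{1..N}. (if k = Suc n then w ! n else 1))"
    by (rule prod.cong) auto
  also have "\<dots> = w ! n" using assms by (simp add: prod.delta)
  finally show ?thesis .
qed

lemma case_cp:
  assumes N: "N \<ge> 2" and lw: "length w = N"
    and hW: "\<forall>i. in_bounds w i \<longrightarrow> W i = (\<Sum>r<R. \<Prod>n=1..N. U n r (i ! (n - 1)))"
  shows "has_sekron w W N (\<lambda>k. if k = 1 then R else 1) (\<lambda>k. e_shape N k (w ! (k - 1)))"
proof (rule sekron_intro[where g = "\<lambda>n. n" and A = "\<lambda>k p idx. U k (p ! 0) (idx ! (k - 1))"])
  show "1 \<le> N" using N by simp
  show "\<forall>k\<in>{1..N}. length (e_shape N k (w ! (k - 1))) = length w" using lw by simp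
  show "\<forall>n<length w. (\<Prod>k=1..N. e_shape N k (w ! (k - 1)) ! n) = w ! n"
  proof (intro allI impI)
    fix n assume n: "n < length w"
    have "(\<Prod>k=1..N. e_shape N k (w ! (k - 1)) ! n) = (\<Prod>k=1..N. (if Suc n = k then w ! (k - 1) else 1))"
      using n lw by (intro prod.cong) auto
    then show "(\<Prod>k=1..N. e_shape N k (w ! (k - 1)) ! n) = w ! n" using prod_delta_w n lw by simp
  qed
  show "\<forall>j<N. \<forall>n<length w. e_shape N (Suc j) (w ! (Suc j - 1)) ! n \<noteq> 1 \<longrightarrow> j = n"
    using lw by (auto split: if_splits)
  show "\<forall>i. in_bounds w i \<longrightarrow> W i = (\<Sum>rs\<in>rank_tuples (\<lambda>k. if k = 1 then R else 1) (N - 1).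
          \<Prod>k=1..N. U k (take (min k (N - 1)) rs ! 0) (map2 (mod) i (e_shape N k (w ! (k - 1))) ! (k - 1)))"
  proof (intro allI impI)
    fix i assume ib: "in_bounds w i"
    have li: "length i = N" and ib2: "\<forall>n<N. i ! n < w ! n" using ib lw unfolding in_bounds_def by auto
    have "(\<Sum>rs\<in>rank_tuples (\<lambda>k. if k = 1 then R else 1) (N - 1).
          \<Prod>k=1..N. U k (take (min k (N - 1)) rs ! 0) (map2 (mod) i (e_shape N k (w ! (k - 1))) ! (k - 1)))
        = (\<Sum>rs\<in>rank_tuples (\<lambda>k. if k = 1 then R else 1) (N - 1). \<Prod>k=1..N. U k (rs ! 0) (i ! (k - 1)))"
    proof (intro sum.cong refl prod.cong)
      fix rs :: "nat list" and k assume k: "k \<in> {1..N}"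
      have tk: "take (min k (N - 1)) rs ! 0 = rs ! 0" using k N by (simp add: nth_take)
      have k1: "k - 1 < N" and sk: "Suc (k - 1) = k" using k by auto
      have lt: "i ! (k - 1) < w ! (k - 1)" using ib2 k1 by blast
      have "map2 (mod) i (e_shape N k (w ! (k - 1))) ! (k - 1) = i ! (k - 1) mod (e_shape N k (w ! (k - 1)) ! (k - 1))"
        using k1 li by (simp add: nth_map2)
      also have "\<dots> = i ! (k - 1)" using k1 sk lt by simp
      finally have "map2 (mod) i (e_shape N k (w ! (k - 1))) ! (k - 1) = i ! (k - 1)" .
      with tk show "U k (take (min k (N - 1)) rs ! 0) (map2 (mod) i (e_shape N k (w ! (k - 1))) ! (k - 1))
          = U k (rs ! 0) (i ! (k - 1))" by simp
    qed
    also have "\<dots> = (\<Sum>r<R. \<Prod>n=1..N. U n r (i ! (n - 1)))"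
      by (rule rt_sum[OF N])
    finally show "W i = (\<Sum>rs\<in>rank_tuples (\<lambda>k. if k = 1 then R else 1) (N - 1).
          \<Prod>k=1..N. U k (take (min k (N - 1)) rs ! 0) (map2 (mod) i (e_shape N k (w ! (k - 1))) ! (k - 1)))"
      using hW ib by simp
  qed
qed


lemma case_tucker:
  assumes N: "N \<ge> 2" and lw: "length w = N"
    and hW: "\<forall>i. in_bounds w i \<longrightarrow>
          W i = (\<Sum>rs\<in>rank_tuples RT N. G rs * (\<Prod>n=1..N. U n (i ! (n - 1)) (rs ! (n - 1))))"
  shows "has_sekron w W (N + 1) RT
             (\<lambda>k. if k \<le> N then e_shape N k (w ! (k - 1)) else replicate N 1)"
proof (rule sekron_intro[where g = "\<lambda>n. n" and
      A = "\<lambda>k p idx. if k \<le> N then U k (idx ! (k - 1)) (p ! (k - 1)) else G (take N p)"])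
  show "1 \<le> N + 1" by simp
  show "\<forall>k\<in>{1..N + 1}. length (if k \<le> N then e_shape N k (w ! (k - 1)) else replicate N 1) = length w"
    using lw by simp
  show "\<forall>n<length w. (\<Prod>k=1..N + 1. (if k \<le> N then e_shape N k (w ! (k - 1)) else replicate N 1) ! n) = w ! n"
  proof (intro allI impI)
    fix n assume n: "n < length w"
    have "(\<Prod>k=1..N + 1. (if k \<le> N then e_shape N k (w ! (k - 1)) else replicate N 1) ! n)
        = (\<Prod>k=1..N + 1. (if Suc n = k then w ! (k - 1) else 1))"
      using n lw by (intro prod.cong) auto
    also have "\<dots> = w ! n" using prod_delta_w[of n "N + 1" w] n lw by simp
    finally show "(\<Prod>k=1..N + 1. (if k \<le> N then e_shape N k (w ! (k - 1)) else replicate N 1) ! n) = w ! n" .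
  qed
  show "\<forall>j<N + 1. \<forall>n<length w. (if Suc j \<le> N then e_shape N (Suc j) (w ! (Suc j - 1)) else replicate N 1) ! n \<noteq> 1 \<longrightarrow> j = n"
    using lw by auto
  show "\<forall>i. in_bounds w i \<longrightarrow> W i = (\<Sum>rs\<in>rank_tuples RT (N + 1 - 1).
          \<Prod>k=1..N + 1. (if k \<le> N then U k (map2 (mod) i (if k \<le> N then e_shape N k (w ! (k - 1)) else replicate N 1) ! (k - 1))
             (take (min k (N + 1 - 1)) rs ! (k - 1)) else G (take N (take (min k (N + 1 - 1)) rs))))"
  proof (intro allI impI)
    fix i assume ib: "in_bounds w i"
    have li: "length i = N" and ib2: "\<forall>n<N. i ! n < w ! n" using ib lw unfolding in_bounds_def by auto
    show "W i = (\<Sum>rs\<in>rank_tuples RT (N + 1 - 1).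
          \<Prod>k=1..N + 1. (if k \<le> N then U k (map2 (mod) i (if k \<le> N then e_shape N k (w ! (k - 1)) else replicate N 1) ! (k - 1))
             (take (min k (N + 1 - 1)) rs ! (k - 1)) else G (take N (take (min k (N + 1 - 1)) rs))))"
      unfolding hW[rule_format, OF ib]
    proof (rule sum.cong)
      show "rank_tuples RT N = rank_tuples RT (N + 1 - 1)" by simp
    next
      fix rs assume rs: "rs \<in> rank_tuples RT (N + 1 - 1)"
      then have lr: "length rs = N" unfolding rank_tuples_def by simp
      let ?F = "\<lambda>k. (if k \<le> N then U k (map2 (mod) i (if k \<le> N then e_shape N k (w ! (k - 1)) else replicate N 1) ! (k - 1))
             (take (min k (N + 1 - 1)) rs ! (k - 1)) else G (take N (take (min k (N + 1 - 1)) rs)))"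
      have "(\<Prod>k=1..N + 1. ?F k) = (\<Prod>k=1..N. ?F k) * ?F (Suc N)"
        by simp
      also have "?F (Suc N) = G rs" using lr by simp
      also have "(\<Prod>k=1..N. ?F k) = (\<Prod>n=1..N. U n (i ! (n - 1)) (rs ! (n - 1)))"
      proof (rule prod.cong[OF refl])
        fix k assume k: "k \<in> {1..N}"
        have k1: "k - 1 < N" and sk: "Suc (k - 1) = k" and kN: "k \<le> N" using k by auto
        have lt: "i ! (k - 1) < w ! (k - 1)" using ib2 k1 by blast
        have "map2 (mod) i (e_shape N k (w ! (k - 1))) ! (k - 1) = i ! (k - 1) mod (e_shape N k (w ! (k - 1)) ! (k - 1))"
          using k1 li by (simp add: nth_map2)
        also have "\<dots> = i ! (k - 1)" using k1 sk lt by simp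
        finally have m: "map2 (mod) i (e_shape N k (w ! (k - 1))) ! (k - 1) = i ! (k - 1)" .
        have t: "take (min k (N + 1 - 1)) rs ! (k - 1) = rs ! (k - 1)" using kN k by (simp add: nth_take)
        show "?F k = U k (i ! (k - 1)) (rs ! (k - 1))" using m t kN by simp
      qed
      finally show "G rs * (\<Prod>n=1..N. U n (i ! (n - 1)) (rs ! (n - 1))) = (\<Prod>k=1..N + 1. ?F k)" by simp
    qed
  qed
qed


lemma case_tr:
  assumes N: "N \<ge> 2" and lw: "length w = N"
    and hW: "\<forall>i. in_bounds w i \<longrightarrow>
          W i = (\<Sum>rs\<in>rank_tuples RT N.
                  \<Prod>n=1..N. G n (i ! (n - 1)) (rs ! (n - 1)) (if n = N then rs ! 0 else rs ! n))"
  shows "has_sekron w W (N + 1) RT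
             (\<lambda>k. if k = 1 then replicate N 1 else e_shape N (k - 1) (w ! (k - 2)))"
proof (rule sekron_intro[where g = "\<lambda>n. Suc n" and
      A = "\<lambda>k p idx. if k = 1 then 1 else G (k - 1) (idx ! (k - 2)) (p ! (k - 2)) (if k - 1 = N then p ! 0 else p ! (k - 1))"])
  show "1 \<le> N + 1" by simp
  show "\<forall>k\<in>{1..N + 1}. length (if k = 1 then replicate N 1 else e_shape N (k - 1) (w ! (k - 2))) = length w"
    using lw by simp
  show "\<forall>n<length w. (\<Prod>k=1..N + 1. (if k = 1 then replicate N 1 else e_shape N (k - 1) (w ! (k - 2))) ! n) = w ! n"
  proof (intro allI impI)
    fix n assume n: "n < length w"
    let ?f = "\<lambda>k. (if k = 1 then replicate N 1 else e_shape N (k - 1) (w ! (k - 2))) ! n"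
    have "(\<Prod>k=1..N + 1. ?f k) = ?f 1 * (\<Prod>k=Suc 1..Suc N. ?f k)"
      by (simp add: prod.atLeast_Suc_atMost del: prod.cl_ivl_Suc)
    also have "?f 1 = 1" using n lw by simp
    also have "(\<Prod>k=Suc 1..Suc N. ?f k) = (\<Prod>k=1..N. ?f (Suc k))"
      by (simp only: prod.atLeast_Suc_atMost_Suc_shift comp_def)
    also have "\<dots> = (\<Prod>k=1..N. (if Suc n = k then w ! (k - 1) else 1))"
    proof (rule prod.cong[OF refl])
      fix k assume k: "k \<in> {1..N}"
      then have "Suc k - 2 = k - 1" by auto
      then show "?f (Suc k) = (if Suc n = k then w ! (k - 1) else 1)" using k n lw by auto
    qed
    also have "\<dots> = w ! n" using prod_delta_w n lw by simp
    finally show "(\<Prod>k=1..N + 1. ?f k) = w ! n" by simp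
  qed
  show "\<forall>j<N + 1. \<forall>n<length w. (if Suc j = 1 then replicate N 1 else e_shape N (Suc j - 1) (w ! (Suc j - 2))) ! n \<noteq> 1 \<longrightarrow> j = Suc n"
    using lw by auto
  show "\<forall>i. in_bounds w i \<longrightarrow> W i = (\<Sum>rs\<in>rank_tuples RT (N + 1 - 1).
          \<Prod>k=1..N + 1. (if k = 1 then 1 else G (k - 1) (map2 (mod) i (if k = 1 then replicate N 1 else e_shape N (k - 1) (w ! (k - 2))) ! (k - 2))
             (take (min k (N + 1 - 1)) rs ! (k - 2)) (if k - 1 = N then take (min k (N + 1 - 1)) rs ! 0 else take (min k (N + 1 - 1)) rs ! (k - 1))))"
  proof (intro allI impI)
    fix i assume ib: "in_bounds w i"
    have li: "length i = N" and ib2: "\<forall>n<N. i ! n < w ! n" using ib lw unfolding in_bounds_def by auto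
    show "W i = (\<Sum>rs\<in>rank_tuples RT (N + 1 - 1).
          \<Prod>k=1..N + 1. (if k = 1 then 1 else G (k - 1) (map2 (mod) i (if k = 1 then replicate N 1 else e_shape N (k - 1) (w ! (k - 2))) ! (k - 2))
             (take (min k (N + 1 - 1)) rs ! (k - 2)) (if k - 1 = N then take (min k (N + 1 - 1)) rs ! 0 else take (min k (N + 1 - 1)) rs ! (k - 1))))"
      unfolding hW[rule_format, OF ib]
    proof (rule sum.cong)
      show "rank_tuples RT N = rank_tuples RT (N + 1 - 1)" by simp
    next
      fix rs assume rs: "rs \<in> rank_tuples RT (N + 1 - 1)"
      then have lr: "length rs = N" unfolding rank_tuples_def by simp
      let ?F = "\<lambda>k. (if k = 1 then 1 else G (k - 1) (map2 (mod) i (if k = 1 then replicate N 1 else e_shape N (k - 1) (w ! (k - 2))) ! (k - 2))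
             (take (min k (N + 1 - 1)) rs ! (k - 2)) (if k - 1 = N then take (min k (N + 1 - 1)) rs ! 0 else take (min k (N + 1 - 1)) rs ! (k - 1)))"
      have "(\<Prod>k=1..N + 1. ?F k) = ?F 1 * (\<Prod>k=Suc 1..Suc N. ?F k)"
        by (simp add: prod.atLeast_Suc_atMost del: prod.cl_ivl_Suc)
      also have "?F 1 = 1" by simp
      also have "(\<Prod>k=Suc 1..Suc N. ?F k) = (\<Prod>k=1..N. ?F (Suc k))"
        by (simp only: prod.atLeast_Suc_atMost_Suc_shift comp_def)
      also have "\<dots> = (\<Prod>n=1..N. G n (i ! (n - 1)) (rs ! (n - 1)) (if n = N then rs ! 0 else rs ! n))"
      proof (rule prod.cong[OF refl])
        fix k assume k: "k \<in> {1..N}"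
        have k1: "k - 1 < N" and sk: "Suc (k - 1) = k" and kN: "k \<le> N" and s2: "Suc k - 2 = k - 1"
          using k by auto
        have lt: "i ! (k - 1) < w ! (k - 1)" using ib2 k1 by blast
        have "map2 (mod) i (e_shape N k (w ! (k - 1))) ! (k - 1) = i ! (k - 1) mod (e_shape N k (w ! (k - 1)) ! (k - 1))"
          using k1 li by (simp add: nth_map2)
        also have "\<dots> = i ! (k - 1)" using k1 sk lt by simp
        finally have m: "map2 (mod) i (e_shape N k (w ! (k - 1))) ! (k - 1) = i ! (k - 1)" .
        have t1: "take (min (Suc k) (N + 1 - 1)) rs ! (k - 1) = rs ! (k - 1)"
          by (rule nth_take) (use kN k in auto)
        have t2: "take (min (Suc k) (N + 1 - 1)) rs ! 0 = rs ! 0"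
          by (rule nth_take) (use kN k N in auto)
        have t3: "k \<noteq> N \<Longrightarrow> take (min (Suc k) (N + 1 - 1)) rs ! k = rs ! k"
          by (rule nth_take) (use kN in auto)
        show "?F (Suc k) = G k (i ! (k - 1)) (rs ! (k - 1)) (if k = N then rs ! 0 else rs ! k)"
          using m t1 t2 t3 s2 k N by simp
      qed
      finally show "(\<Prod>n=1..N. G n (i ! (n - 1)) (rs ! (n - 1)) (if n = N then rs ! 0 else rs ! n)) = (\<Prod>k=1..N + 1. ?F k)" by simp
    qed
  qed
qed



theorem theorem2:
  fixes N :: nat and w :: "nat list" and W :: tensor
  assumes "N \<ge> 2" and "length w = N"
  shows
   "(\<forall>(R::nat) (U :: nat \<Rightarrow> nat \<Rightarrow> nat \<Rightarrow> real).
      (\<forall>i. in_bounds w i \<longrightarrow> W i = (\<Sum>r<R. \<Prod>n=1..N. U n r (i ! (n - 1))))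
      \<longrightarrow> has_sekron w W N (\<lambda>k. if k = 1 then R else 1)
             (\<lambda>k. e_shape N k (w ! (k - 1))))
  \<and> (\<forall>(RT :: nat \<Rightarrow> nat) (G :: tensor) (U :: nat \<Rightarrow> nat \<Rightarrow> nat \<Rightarrow> real).
      (\<forall>i. in_bounds w i \<longrightarrow>
          W i = (\<Sum>rs\<in>rank_tuples RT N. G rs * (\<Prod>n=1..N. U n (i ! (n - 1)) (rs ! (n - 1)))))
      \<longrightarrow> has_sekron w W (N + 1) RT
             (\<lambda>k. if k \<le> N then e_shape N k (w ! (k - 1)) else replicate N 1))
  \<and> (\<forall>(RT :: nat \<Rightarrow> nat) (G :: nat \<Rightarrow> nat \<Rightarrow> nat \<Rightarrow> nat \<Rightarrow> real).
      RT (N + 1) = RT 1 \<longrightarrow>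
      (\<forall>i. in_bounds w i \<longrightarrow>
          W i = (\<Sum>rs\<in>rank_tuples RT N.
                  \<Prod>n=1..N. G n (i ! (n - 1)) (rs ! (n - 1)) (if n = N then rs ! 0 else rs ! n)))
      \<longrightarrow> has_sekron w W (N + 1) RT
             (\<lambda>k. if k = 1 then replicate N 1 else e_shape N (k - 1) (w ! (k - 2))))"
    using case_cp[OF assms] case_tucker[OF assms] case_tr[OF assms] by blast

end
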